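(* Let $G$ be a 3-regular graph with $m=3n/2$ edges and let $p=1$. Classify each edge $\langle jk\rangle$ of $G$ by the number $t\in\{0,1,2\}$ of vertices adjacent to both $j$ and $k$ (equivalently the number of triangles containing the edge). There are functions $F^{(0)},F^{(1)},F^{(2)}$ of $(\gamma_1,\beta_1)$, independent of $G$, such that for every such $G$ and all $(\gamma_1,\beta_1)$, $$F_1(\gamma_1,\beta_1)=m\Big[f_0\,F^{(0)}(\gamma_1,\beta_1)+f_1\,F^{(1)}(\gamma_1,\beta_1)+f_2\,F^{(2)}(\gamma_1,\beta_1)\Big],$$ where $f_t$ is the fraction of edges of $G$ of type $t$ (so $f_0+f_1+f_2=1$).
   Context: QAOA for MaxCut. For a graph $G$ on $n$ vertices (qubits) with edge set $E$, $|E|=m$, let $Z_j,X_j$ be the Pauli operators on qubit $j$. The cost operator is $C=\sum_{\langle jk\rangle\in E}C_{\langle jk\rangle}$ with $C_{\langle jk\rangle}=\tfrac12(1-Z_jZ_k)$; set $B=\sum_{j=1}^n X_j$, $U(C,\gamma)=e^{-i\gamma C}$, $U(B,\beta)=e^{-i\beta B}$, and $|s\rangle=2^{-n/2}\sum_{z\in\{0,1\}^n}|z\rangle$. For $p=1$, $|\gamma_1,\beta_1\rangle=U(B,\beta_1)U(C,\gamma_1)|s\rangle$ and $F_1(\gamma_1,\beta_1)=\langle\gamma_1,\beta_1|C|\gamma_1,\beta_1\rangle$. *)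

theory Defs
  imports Complex_Main
begin

text \<open>n-qubit operators, qubits indexed by 0..n-1. A computational basis state z in {0,1}^n
  is represented by the set of qubits in state 1, a subset of {..<n}.\<close>

type_synonym qmat = "nat set \<Rightarrow> nat set \<Rightarrow> complex"
type_synonym qvec = "nat set \<Rightarrow> complex"

definition basis :: "nat \<Rightarrow> nat set set" where
  "basis n = Pow {..<n}"

definition mid :: qmat where
  "mid x y = (if x = y then 1 else 0)"

definition mmult :: "nat \<Rightarrow> qmat \<Rightarrow> qmat \<Rightarrow> qmat" where
  "mmult n A B x y = (\<Sum>z\<in>basis n. A x z * B z y)"

definition madd :: "qmat \<Rightarrow> qmat \<Rightarrow> qmat" where
  "madd A B x y = A x y + B x y"

definition mscale :: "complex \<Rightarrow> qmat \<Rightarrow> qmat" where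
  "mscale c A x y = c * A x y"

definition msum :: "('a \<Rightarrow> qmat) \<Rightarrow> 'a set \<Rightarrow> qmat" where
  "msum f S x y = (\<Sum>a\<in>S. f a x y)"

fun mpow :: "nat \<Rightarrow> qmat \<Rightarrow> nat \<Rightarrow> qmat" where
  "mpow n A 0 = mid"
| "mpow n A (Suc k) = mmult n A (mpow n A k)"

definition mexp :: "nat \<Rightarrow> qmat \<Rightarrow> qmat" where
  "mexp n A x y = (\<Sum>k. mpow n A k x y / of_nat (fact k))"

definition mapply :: "nat \<Rightarrow> qmat \<Rightarrow> qvec \<Rightarrow> qvec" where
  "mapply n A v x = (\<Sum>y\<in>basis n. A x y * v y)"

definition pauliZ :: "nat \<Rightarrow> qmat" where
  "pauliZ j x y = (if x = y then (if j \<in> x then -1 else 1) else 0)"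

definition pauliX :: "nat \<Rightarrow> qmat" where
  "pauliX j x y = (if x = (if j \<in> y then y - {j} else insert j y) then 1 else 0)"

definition simple_graph :: "nat \<Rightarrow> (nat \<Rightarrow> nat \<Rightarrow> bool) \<Rightarrow> bool" where
  "simple_graph n adj \<longleftrightarrow> (\<forall>j k. adj j k \<longrightarrow> j < n \<and> k < n \<and> j \<noteq> k \<and> adj k j)"

definition regular3 :: "nat \<Rightarrow> (nat \<Rightarrow> nat \<Rightarrow> bool) \<Rightarrow> bool" where
  "regular3 n adj \<longleftrightarrow> simple_graph n adj \<and> (\<forall>j<n. card {k. adj j k} = 3)"

definition edges :: "(nat \<Rightarrow> nat \<Rightarrow> bool) \<Rightarrow> (nat \<times> nat) set" where
  "edges adj = {(j, k). j < k \<and> adj j k}"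

definition cost_op :: "nat \<Rightarrow> (nat \<Rightarrow> nat \<Rightarrow> bool) \<Rightarrow> qmat" where
  "cost_op n adj = msum (\<lambda>(j, k). mscale (1/2) (madd mid (mscale (-1) (mmult n (pauliZ j) (pauliZ k)))))
                        (edges adj)"

definition mixer_op :: "nat \<Rightarrow> qmat" where
  "mixer_op n = msum pauliX {..<n}"

definition U_op :: "nat \<Rightarrow> qmat \<Rightarrow> real \<Rightarrow> qmat" where
  "U_op n A t = mexp n (mscale (- (\<i> * complex_of_real t)) A)"

definition plus_state :: "nat \<Rightarrow> qvec" where
  "plus_state n x = complex_of_real (1 / sqrt (2 ^ n))"

definition qaoa_state :: "nat \<Rightarrow> (nat \<Rightarrow> nat \<Rightarrow> bool) \<Rightarrow> real \<Rightarrow> real \<Rightarrow> qvec" where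
  "qaoa_state n adj \<gamma> \<beta> =
     mapply n (U_op n (mixer_op n) \<beta>) (mapply n (U_op n (cost_op n adj) \<gamma>) (plus_state n))"

definition F1 :: "nat \<Rightarrow> (nat \<Rightarrow> nat \<Rightarrow> bool) \<Rightarrow> real \<Rightarrow> real \<Rightarrow> complex" where
  "F1 n adj \<gamma> \<beta> =
     (let \<psi> = qaoa_state n adj \<gamma> \<beta> in
        \<Sum>x\<in>basis n. cnj (\<psi> x) * mapply n (cost_op n adj) \<psi> x)"

definition edge_type :: "(nat \<Rightarrow> nat \<Rightarrow> bool) \<Rightarrow> nat \<times> nat \<Rightarrow> nat" where
  "edge_type adj e = card {u. adj (fst e) u \<and> adj (snd e) u}"

definition edge_frac :: "(nat \<Rightarrow> nat \<Rightarrow> bool) \<Rightarrow> nat \<Rightarrow> real" where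
  "edge_frac adj t = real (card {e \<in> edges adj. edge_type adj e = t}) / real (card (edges adj))"

end

theory Submission
  imports Defs "HOL-Analysis.Complex_Transcendental"
begin

lemma sum_pow_prod:
  fixes h :: "'a \<Rightarrow> bool \<Rightarrow> 'b::comm_semiring_1"
  assumes "finite A"
  shows "(\<Sum>x\<in>Pow A. \<Prod>l\<in>A. h l (l \<in> x)) = (\<Prod>l\<in>A. h l True + h l False)"
proof -
  have "(\<Prod>l\<in>A. h l True + h l False) = (\<Sum>X\<in>Pow A. (\<Prod>x\<in>X. h x True) * (\<Prod>x\<in>A-X. h x False))"
    using prod_add[OF assms, of "\<lambda>x. h x True" "\<lambda>x. h x False"] by simp
  also have "\<dots> = (\<Sum>x\<in>Pow A. \<Prod>l\<in>A. h l (l \<in> x))"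
  proof (rule sum.cong)
    fix X assume X: "X \<in> Pow A"
    have "(\<Prod>l\<in>A. h l (l \<in> X)) = (\<Prod>l\<in>A \<inter> X. h l (l \<in> X)) * (\<Prod>l\<in>A - X. h l (l \<in> X))"
      using assms by (metis prod.Int_Diff)
    also have "\<dots> = (\<Prod>x\<in>X. h x True) * (\<Prod>x\<in>A-X. h x False)"
      using X by (auto intro!: arg_cong2[where f="(*)"] prod.cong simp: Int_absorb1)
    finally show "(\<Prod>x\<in>X. h x True) * (\<Prod>x\<in>A-X. h x False) = (\<Prod>l\<in>A. h l (l \<in> X))" by simp
  qed simp
  finally show ?thesis by simp
qed

lemma sum_Pow_insert:
  assumes "finite B" "v \<notin> B"
  shows "(\<Sum>y\<in>Pow (insert v B). F y) = (\<Sum>y\<in>Pow B. F y + F (insert v y))"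
proof -
  have d: "Pow B \<inter> insert v ` Pow B = {}" using assms by auto
  have i: "inj_on (insert v) (Pow B)" using assms unfolding inj_on_def by (metis PowD insert_ident subsetD)
  show ?thesis
    unfolding Pow_insert sum.union_disjoint[OF finite_Pow_iff[THEN iffD2, OF assms(1)] finite_imageI[OF finite_Pow_iff[THEN iffD2, OF assms(1)]] d]
    by (simp add: sum.reindex[OF i] sum.distrib)
qed

definition sgr :: "bool \<Rightarrow> real" where "sgr b = (if b then -1 else 1)"

lemma finite_basis[simp]: "finite (basis n)" by (simp add: basis_def)

lemma mpow_diag:
  assumes D: "\<And>x y. x\<in>basis n \<Longrightarrow> y\<in>basis n \<Longrightarrow> D x y = (if x=y then d x else 0)"
  shows "x\<in>basis n \<Longrightarrow> y\<in>basis n \<Longrightarrow> mpow n D k x y = (if x=y then d x ^ k else 0)"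
proof (induction k arbitrary: x y)
  case 0 then show ?case by (simp add: mid_def)
next
  case (Suc k)
  have "mpow n D (Suc k) x y = (\<Sum>z\<in>basis n. D x z * mpow n D k z y)" by (simp add: mmult_def)
  also have "\<dots> = (\<Sum>z\<in>basis n. if z = x then d x * (if x=y then d x^k else 0) else 0)"
    by (rule sum.cong) (use Suc D in auto)
  also have "\<dots> = (if x=y then d x ^ Suc k else 0)" using Suc by simp
  finally show ?case .
qed

lemma exp_series: "(\<lambda>k. c^k / of_nat (fact k)) sums exp (c::complex)"
  using exp_converges[of c] by (simp add: scaleR_conv_of_real divide_inverse mult.commute)

lemma mexp_diag:
  assumes D: "\<And>x y. x\<in>basis n \<Longrightarrow> y\<in>basis n \<Longrightarrow> D x y = (if x=y then d x else 0)"
  and "x\<in>basis n" "y\<in>basis n"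
  shows "mexp n D x y = (if x=y then exp (d x) else 0)"
proof -
  have "mexp n D x y = (\<Sum>k. (if x=y then d x^k else 0) / of_nat (fact k))"
    unfolding mexp_def using mpow_diag[OF D assms(2,3)] by simp
  then show ?thesis using sums_unique[OF exp_series[of "d x"]] by auto
qed

lemma mpow_mscale: "mpow n (mscale c A) k x y = c^k * mpow n A k x y"
  by (induction k arbitrary: x y) (simp_all add: mid_def mmult_def mscale_def sum_distrib_left mult_ac)

definition cutr :: "(nat \<Rightarrow> nat \<Rightarrow> bool) \<Rightarrow> nat set \<Rightarrow> real" where
  "cutr adj x = (\<Sum>e\<in>edges adj. (1 - sgr (fst e \<in> x) * sgr (snd e \<in> x)) / 2)"

lemma ZZ_basis:
  assumes "x\<in>basis n" "y\<in>basis n"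
  shows "mmult n (pauliZ j) (pauliZ k) x y = (if x = y then of_real (sgr (j\<in>x) * sgr (k\<in>x)) else 0)"
proof -
  have "mmult n (pauliZ j) (pauliZ k) x y = (\<Sum>z\<in>basis n. if z = x then pauliZ j x x * pauliZ k x y else 0)"
    unfolding mmult_def by (rule sum.cong) (auto simp: pauliZ_def)
  also have "\<dots> = pauliZ j x x * pauliZ k x y" using assms by simp
  finally show ?thesis by (simp add: pauliZ_def sgr_def)
qed

lemma cost_basis:
  assumes "x\<in>basis n" "y\<in>basis n"
  shows "cost_op n adj x y = (if x = y then of_real (cutr adj x) else 0)"
proof -
  have "cost_op n adj x y = (\<Sum>e\<in>edges adj. (1/2) * (mid x y - mmult n (pauliZ (fst e)) (pauliZ (snd e)) x y))"
    unfolding cost_op_def msum_def by (rule sum.cong) (auto simp: mscale_def madd_def split: prod.splits)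
  also have "\<dots> = (if x = y then of_real (cutr adj x) else 0)"
    by (auto simp: ZZ_basis[OF assms] mid_def cutr_def of_real_sum diff_divide_distrib)
  finally show ?thesis .
qed

definition flip :: "nat \<Rightarrow> nat set \<Rightarrow> nat set" where
  "flip j x = (if j \<in> x then x - {j} else insert j x)"

lemma flip_flip: "flip j (flip j x) = x"
  unfolding flip_def by (auto simp: insert_absorb)
lemma flip_eq: "(x = flip j z) \<longleftrightarrow> (z = flip j x)"
  using flip_flip by metis

lemma flip_basis: "x \<in> basis n \<Longrightarrow> j < n \<Longrightarrow> flip j x \<in> basis n"
  unfolding flip_def basis_def by auto

lemma mixer_apply:
  assumes "x \<in> basis n"
  shows "(\<Sum>z\<in>basis n. mixer_op n x z * f z) = (\<Sum>j<n. f (flip j x))"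
proof -
  have "(\<Sum>z\<in>basis n. mixer_op n x z * f z) = (\<Sum>z\<in>basis n. \<Sum>j<n. if z = flip j x then f z else 0)"
    unfolding mixer_op_def msum_def sum_distrib_right
  proof (intro sum.cong refl)
    fix z j
    have "pauliX j x z = (if z = flip j x then 1 else 0)"
      unfolding pauliX_def using flip_eq[of x j z] by (simp add: flip_def)
    then show "pauliX j x z * f z = (if z = flip j x then f z else 0)" by simp
  qed
  also have "\<dots> = (\<Sum>j<n. \<Sum>z\<in>basis n. if z = flip j x then f z else 0)" by (rule sum.swap)
  also have "\<dots> = (\<Sum>j<n. f (flip j x))"
    using flip_basis[OF assms] by (intro sum.cong refl) simp
  finally show ?thesis .
qed

definition chi :: "nat set \<Rightarrow> nat set \<Rightarrow> complex" where
  "chi S x = (\<Prod>l\<in>S. of_real (sgr (l \<in> x)))"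

lemma chi_flip:
  assumes "finite S"
  shows "chi S (flip j x) = (if j \<in> S then -1 else 1) * chi S x"
proof (cases "j \<in> S")
  case True
  have "chi S (flip j x) = of_real (sgr (j \<in> flip j x)) * (\<Prod>l\<in>S-{j}. of_real (sgr (l \<in> flip j x)))"
    unfolding chi_def using prod.remove[OF assms True] by blast
  also have "\<dots> = - (of_real (sgr (j \<in> x)) * (\<Prod>l\<in>S-{j}. of_real (sgr (l \<in> x))))"
    by (auto simp: flip_def sgr_def intro!: prod.cong)
  also have "\<dots> = - chi S x"
    unfolding chi_def using prod.remove[OF assms True, of "\<lambda>l. complex_of_real (sgr (l\<in>x))"] by simp
  finally show ?thesis using True by simp
next
  case False
  then show ?thesis unfolding chi_def by (auto simp: flip_def intro!: prod.cong arg_cong[where f=sgr])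
qed

definition lam :: "nat \<Rightarrow> nat set \<Rightarrow> complex" where
  "lam n S = (\<Sum>j<n. if j \<in> S then -1 else 1)"

lemma eigen:
  assumes "x \<in> basis n" "S \<in> basis n"
  shows "(\<Sum>z\<in>basis n. mixer_op n x z * chi S z) = lam n S * chi S x"
proof -
  have fS: "finite S" using assms(2) unfolding basis_def by (auto intro: finite_subset)
  show ?thesis
    unfolding mixer_apply[OF assms(1)] chi_flip[OF fS] lam_def sum_distrib_right by simp
qed

lemma prod_subset_if:
  fixes f :: "'a \<Rightarrow> 'b::comm_monoid_mult"
  assumes "finite A" "S \<subseteq> A"
  shows "prod f S = (\<Prod>l\<in>A. if l \<in> S then f l else 1)"
  using assms by (simp add: prod.If_cases Int_absorb1 Int_commute)

lemma sgr_sq[simp]: "sgr b * sgr b = 1" by (simp add: sgr_def)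

lemma ortho:
  assumes "x \<in> basis n" "y \<in> basis n"
  shows "(\<Sum>S\<in>basis n. chi S x * chi S y) = (if x = y then 2^n else 0)"
proof -
  have e: "chi S x * chi S y = (\<Prod>l\<in>{..<n}. (\<lambda>l b. if b then complex_of_real (sgr (l\<in>x) * sgr (l\<in>y)) else 1) l (l \<in> S))"
    if "S \<in> Pow {..<n}" for S
  proof -
    have "chi S x * chi S y = (\<Prod>l\<in>S. complex_of_real (sgr (l\<in>x) * sgr (l\<in>y)))"
      unfolding chi_def by (simp add: prod.distrib[symmetric])
    also have "\<dots> = (\<Prod>l\<in>{..<n}. if l \<in> S then complex_of_real (sgr (l\<in>x) * sgr (l\<in>y)) else 1)"
      by (rule prod_subset_if) (use that in auto)
    finally show ?thesis by simp
  qed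
  have "(\<Sum>S\<in>basis n. chi S x * chi S y)
      = (\<Sum>S\<in>Pow {..<n}. \<Prod>l\<in>{..<n}. (\<lambda>l b. if b then complex_of_real (sgr (l\<in>x) * sgr (l\<in>y)) else 1) l (l \<in> S))"
    unfolding basis_def using e by (rule sum.cong[OF refl])
  also have "\<dots> = (\<Prod>l\<in>{..<n}. complex_of_real (sgr (l\<in>x) * sgr (l\<in>y)) + 1)"
    using sum_pow_prod[of "{..<n}" "\<lambda>l b. if b then complex_of_real (sgr (l\<in>x) * sgr (l\<in>y)) else 1"] by simp
  also have "\<dots> = (if x = y then 2^n else 0)"
  proof (cases "x = y")
    case True
    then have "(\<Prod>l\<in>{..<n}. complex_of_real (sgr (l\<in>x) * sgr (l\<in>y)) + 1) = (\<Prod>l\<in>{..<n}. 2)"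
      by (intro prod.cong refl) simp
    then show ?thesis using True by simp
  next
    case False
    then obtain l where l: "l \<in> x \<longleftrightarrow> l \<notin> y" by blast
    then have "l < n" using assms unfolding basis_def by auto
    moreover have "complex_of_real (sgr (l\<in>x) * sgr (l\<in>y)) + 1 = 0" using l by (auto simp: sgr_def)
    ultimately have "(\<Prod>l\<in>{..<n}. complex_of_real (sgr (l\<in>x) * sgr (l\<in>y)) + 1) = 0"
      by (intro prod_zero) auto
    then show ?thesis using False by simp
  qed
  finally show ?thesis .
qed

lemma mpow_B:
  assumes "x \<in> basis n" "y \<in> basis n"
  shows "mpow n (mixer_op n) k x y = (1/2^n) * (\<Sum>S\<in>basis n. chi S x * chi S y * lam n S ^ k)"
  using assms
proof (induction k arbitrary: x)
  case 0
  then show ?case using ortho[of x n y] by (simp add: mid_def)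
next
  case (Suc k)
  have "mpow n (mixer_op n) (Suc k) x y
     = (\<Sum>z\<in>basis n. mixer_op n x z * ((1/2^n) * (\<Sum>S\<in>basis n. chi S z * chi S y * lam n S ^ k)))"
    using Suc by (simp add: mmult_def)
  also have "\<dots> = (1/2^n) * (\<Sum>S\<in>basis n. (\<Sum>z\<in>basis n. mixer_op n x z * chi S z) * (chi S y * lam n S ^ k))"
  proof -
    have "(\<Sum>z\<in>basis n. mixer_op n x z * ((1/2^n) * (\<Sum>S\<in>basis n. chi S z * chi S y * lam n S ^ k)))
       = (1/2^n) * (\<Sum>z\<in>basis n. \<Sum>S\<in>basis n. mixer_op n x z * chi S z * (chi S y * lam n S ^ k))"
    proof -
      have "\<And>z. mixer_op n x z * ((1/2^n) * (\<Sum>S\<in>basis n. chi S z * chi S y * lam n S ^ k))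
          = (1/2^n) * (\<Sum>S\<in>basis n. mixer_op n x z * chi S z * (chi S y * lam n S ^ k))"
        by (simp add: sum_distrib_left mult.assoc mult.left_commute)
      then show ?thesis by (simp add: sum_distrib_left)
    qed
    also have "\<dots> = (1/2^n) * (\<Sum>S\<in>basis n. \<Sum>z\<in>basis n. mixer_op n x z * chi S z * (chi S y * lam n S ^ k))"
      by (rule arg_cong[where f="\<lambda>t. (1/2^n) * t"], rule sum.swap)
    also have "\<dots> = (1/2^n) * (\<Sum>S\<in>basis n. (\<Sum>z\<in>basis n. mixer_op n x z * chi S z) * (chi S y * lam n S ^ k))"
      by (simp add: sum_distrib_right)
    finally show ?thesis .
  qed
  also have "\<dots> = (1/2^n) * (\<Sum>S\<in>basis n. chi S x * chi S y * lam n S ^ Suc k)"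
  proof (intro arg_cong[where f="\<lambda>t. (1/2^n) * t"] sum.cong refl)
    fix S assume "S \<in> basis n"
    then show "(\<Sum>z\<in>basis n. mixer_op n x z * chi S z) * (chi S y * lam n S ^ k) = chi S x * chi S y * lam n S ^ Suc k"
      using eigen[OF Suc.prems(1), of S] by (simp add: mult_ac)
  qed
  finally show ?case .
qed

lemma sum_pow_prod_if:
  fixes f g :: "'a \<Rightarrow> 'b::comm_semiring_1"
  assumes "finite A"
  shows "(\<Sum>x\<in>Pow A. \<Prod>l\<in>A. if l \<in> x then f l else g l) = (\<Prod>l\<in>A. f l + g l)"
  using sum_pow_prod[OF assms, of "\<lambda>l b. if b then f l else g l"] by simp

lemma mexp_B:
  assumes "x \<in> basis n" "y \<in> basis n"
  shows "mexp n (mscale c (mixer_op n)) x y = (1/2^n) * (\<Sum>S\<in>basis n. chi S x * chi S y * exp (c * lam n S))"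
proof -
  have "(\<lambda>k. mpow n (mscale c (mixer_op n)) k x y / of_nat (fact k))
      = (\<lambda>k. \<Sum>S\<in>basis n. (1/2^n * chi S x * chi S y) * ((c * lam n S)^k / of_nat (fact k)))"
  proof
    fix k
    have "mpow n (mscale c (mixer_op n)) k x y / of_nat (fact k) = c^k * ((1/2^n) * (\<Sum>S\<in>basis n. chi S x * chi S y * lam n S ^ k)) / of_nat (fact k)"
      by (simp add: mpow_mscale mpow_B[OF assms])
    also have "\<dots> = (\<Sum>S\<in>basis n. (1/2^n * chi S x * chi S y) * ((c * lam n S)^k / of_nat (fact k)))"
      by (simp add: sum_distrib_left sum_divide_distrib power_mult_distrib mult_ac)
    finally show "mpow n (mscale c (mixer_op n)) k x y / of_nat (fact k) = (\<Sum>S\<in>basis n. (1/2^n * chi S x * chi S y) * ((c * lam n S)^k / of_nat (fact k)))" .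
  qed
  moreover have "(\<lambda>k. \<Sum>S\<in>basis n. (1/2^n * chi S x * chi S y) * ((c * lam n S)^k / of_nat (fact k)))
     sums (\<Sum>S\<in>basis n. (1/2^n * chi S x * chi S y) * exp (c * lam n S))"
    by (intro sums_sum sums_mult exp_series)
  ultimately show ?thesis unfolding mexp_def
    by (simp add: sums_unique[symmetric] sum_distrib_left mult_ac)
qed

lemma chichi:
  assumes "S \<in> Pow {..<n}"
  shows "chi S x * chi S y = (\<Prod>l\<in>{..<n}. if l \<in> S then complex_of_real (sgr (l\<in>x) * sgr (l\<in>y)) else 1)"
proof -
  have "chi S x * chi S y = (\<Prod>l\<in>S. complex_of_real (sgr (l\<in>x) * sgr (l\<in>y)))"
    unfolding chi_def by (simp add: prod.distrib[symmetric])
  also have "\<dots> = (\<Prod>l\<in>{..<n}. if l \<in> S then complex_of_real (sgr (l\<in>x) * sgr (l\<in>y)) else 1)"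
    by (rule prod_subset_if) (use assms in auto)
  finally show ?thesis .
qed

definition ub :: "real \<Rightarrow> bool \<Rightarrow> bool \<Rightarrow> complex" where
  "ub \<beta> p q = (complex_of_real (sgr p * sgr q) * exp (\<i> * of_real \<beta>) + exp (-(\<i> * of_real \<beta>))) / 2"

lemma UB:
  assumes "x \<in> basis n" "y \<in> basis n"
  shows "U_op n (mixer_op n) \<beta> x y = (\<Prod>l\<in>{..<n}. ub \<beta> (l\<in>x) (l\<in>y))"
proof -
  define c where "c = - (\<i> * complex_of_real \<beta>)"
  have e: "chi S x * chi S y * exp (c * lam n S) =
     (\<Prod>l\<in>{..<n}. (\<lambda>l b. if b then complex_of_real (sgr (l\<in>x) * sgr (l\<in>y)) * exp (-c) else exp c) l (l \<in> S))"
    if "S \<in> Pow {..<n}" for S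
  proof -
    have "exp (c * lam n S) = (\<Prod>l\<in>{..<n}. if l \<in> S then exp (-c) else exp c)"
      unfolding lam_def sum_distrib_left exp_sum[OF finite_lessThan] by (intro prod.cong refl) auto
    then show ?thesis unfolding chichi[OF that] by (auto simp: prod.distrib[symmetric] intro!: prod.cong)
  qed
  have "U_op n (mixer_op n) \<beta> x y = (1/2^n) * (\<Sum>S\<in>Pow {..<n}. chi S x * chi S y * exp (c * lam n S))"
    unfolding U_op_def c_def[symmetric] mexp_B[OF assms] basis_def ..
  also have "\<dots> = (1/2^n) * (\<Prod>l\<in>{..<n}. complex_of_real (sgr (l\<in>x) * sgr (l\<in>y)) * exp (-c) + exp c)"
  proof -
    have "(\<Sum>S\<in>Pow {..<n}. chi S x * chi S y * exp (c * lam n S)) = (\<Sum>S\<in>Pow {..<n}.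
       (\<Prod>l\<in>{..<n}. (\<lambda>l b. if b then complex_of_real (sgr (l\<in>x) * sgr (l\<in>y)) * exp (-c) else exp c) l (l \<in> S)))"
      using e by (rule sum.cong[OF refl])
    also have "\<dots> = (\<Prod>l\<in>{..<n}. complex_of_real (sgr (l\<in>x) * sgr (l\<in>y)) * exp (-c) + exp c)"
      by (rule sum_pow_prod_if) simp
    finally show ?thesis by simp
  qed
  also have "\<dots> = (\<Prod>l\<in>{..<n}. ub \<beta> (l\<in>x) (l\<in>y))"
    unfolding ub_def c_def by (simp add: prod_dividef)
  finally show ?thesis .
qed

lemma phi:
  assumes "y \<in> basis n"
  shows "mapply n (U_op n (cost_op n adj) \<gamma>) (plus_state n) y
     = complex_of_real (1 / sqrt (2^n)) * exp (- (\<i> * of_real \<gamma>) * of_real (cutr adj y))"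
proof -
  have D: "mscale (- (\<i> * of_real \<gamma>)) (cost_op n adj) x z = (if x = z then - (\<i> * of_real \<gamma>) * of_real (cutr adj x) else 0)"
    if "x \<in> basis n" "z \<in> basis n" for x z
    using cost_basis[OF that] by (simp add: mscale_def)
  have "mapply n (U_op n (cost_op n adj) \<gamma>) (plus_state n) y
      = (\<Sum>z\<in>basis n. if z = y then exp (- (\<i> * of_real \<gamma>) * of_real (cutr adj y)) * plus_state n z else 0)"
    unfolding mapply_def U_op_def
    by (intro sum.cong refl) (use mexp_diag[OF D assms] in auto)
  also have "\<dots> = complex_of_real (1 / sqrt (2^n)) * exp (- (\<i> * of_real \<gamma>) * of_real (cutr adj y))"
    using assms by (simp add: plus_state_def)
  finally show ?thesis .
qed

definition phi :: "nat \<Rightarrow> (nat \<Rightarrow> nat \<Rightarrow> bool) \<Rightarrow> real \<Rightarrow> nat set \<Rightarrow> complex" where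
  "phi n adj \<gamma> y = complex_of_real (1 / sqrt (2^n)) * exp (- (\<i> * of_real \<gamma>) * of_real (cutr adj y))"

lemma psi:
  assumes "x \<in> basis n"
  shows "qaoa_state n adj \<gamma> \<beta> x = (\<Sum>y\<in>basis n. (\<Prod>l\<in>{..<n}. ub \<beta> (l\<in>x) (l\<in>y)) * phi n adj \<gamma> y)"
  unfolding qaoa_state_def mapply_def[of n "U_op n (mixer_op n) \<beta>"]
  by (intro sum.cong refl) (simp add: UB[OF assms] phi[unfolded phi_def[symmetric]] phi_def)

lemma ub_cases: "ub \<beta> p q = (if p = q then complex_of_real (cos \<beta>) else - (\<i> * complex_of_real (sin \<beta>)))"
proof -
  have e1: "exp (\<i> * complex_of_real \<beta>) = Complex (cos \<beta>) (sin \<beta>)"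
    using cis_conv_exp[of \<beta>] by (simp add: cis.ctr)
  have e2: "exp (- (\<i> * complex_of_real \<beta>)) = Complex (cos \<beta>) (- sin \<beta>)"
    using cis_conv_exp[of "-\<beta>"] by (simp add: cis.ctr)
  show ?thesis unfolding ub_def e1 e2
    by (cases p; cases q) (simp_all add: sgr_def complex_eq_iff)
qed

definition Gw :: "(bool \<Rightarrow> complex) \<Rightarrow> real \<Rightarrow> bool \<Rightarrow> bool \<Rightarrow> complex" where
  "Gw \<omega> \<beta> a b = \<omega> True * (cnj (ub \<beta> True a) * ub \<beta> True b) + \<omega> False * (cnj (ub \<beta> False a) * ub \<beta> False b)"

lemma Gw_one: "Gw (\<lambda>_. 1) \<beta> a b = (if a = b then 1 else 0)"
  unfolding Gw_def ub_cases
  by (cases a; cases b) (simp_all add: complex_eq_iff sin_cos_squared_add3)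

lemma expect_expand:
  "(\<Sum>x\<in>basis n. (\<Prod>l<n. \<omega> l (l\<in>x)) * (cnj (qaoa_state n adj \<gamma> \<beta> x) * qaoa_state n adj \<gamma> \<beta> x))
   = (\<Sum>y\<in>basis n. \<Sum>y'\<in>basis n. cnj (phi n adj \<gamma> y) * phi n adj \<gamma> y' * (\<Prod>l<n. Gw (\<omega> l) \<beta> (l\<in>y) (l\<in>y')))"
proof -
  define U where "U x y = (\<Prod>l<n. ub \<beta> (l\<in>x) (l\<in>y))" for x y
  define w where "w x = (\<Prod>l<n. \<omega> l (l\<in>x))" for x
  define \<phi> where "\<phi> = phi n adj \<gamma>"
  have "(\<Sum>x\<in>basis n. w x * (cnj (qaoa_state n adj \<gamma> \<beta> x) * qaoa_state n adj \<gamma> \<beta> x))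
      = (\<Sum>x\<in>basis n. \<Sum>y\<in>basis n. \<Sum>y'\<in>basis n. w x * cnj (U x y) * U x y' * (cnj (\<phi> y) * \<phi> y'))"
  proof (intro sum.cong refl)
    fix x assume x: "x \<in> basis n"
    have "cnj (qaoa_state n adj \<gamma> \<beta> x) * qaoa_state n adj \<gamma> \<beta> x
        = (\<Sum>y\<in>basis n. \<Sum>y'\<in>basis n. cnj (U x y * \<phi> y) * (U x y' * \<phi> y'))"
      unfolding psi[OF x] U_def[symmetric] \<phi>_def[symmetric] cnj_sum sum_product ..
    then show "w x * (cnj (qaoa_state n adj \<gamma> \<beta> x) * qaoa_state n adj \<gamma> \<beta> x)
      = (\<Sum>y\<in>basis n. \<Sum>y'\<in>basis n. w x * cnj (U x y) * U x y' * (cnj (\<phi> y) * \<phi> y'))"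
      by (simp add: sum_distrib_left mult_ac)
  qed
  also have "\<dots> = (\<Sum>y\<in>basis n. \<Sum>x\<in>basis n. \<Sum>y'\<in>basis n. w x * cnj (U x y) * U x y' * (cnj (\<phi> y) * \<phi> y'))"
    by (rule sum.swap)
  also have "\<dots> = (\<Sum>y\<in>basis n. \<Sum>y'\<in>basis n. \<Sum>x\<in>basis n. w x * cnj (U x y) * U x y' * (cnj (\<phi> y) * \<phi> y'))"
    by (rule sum.cong[OF refl], rule sum.swap)
  also have "\<dots> = (\<Sum>y\<in>basis n. \<Sum>y'\<in>basis n. cnj (\<phi> y) * \<phi> y' * (\<Prod>l<n. Gw (\<omega> l) \<beta> (l\<in>y) (l\<in>y')))"
  proof (intro sum.cong refl)
    fix y y'
    have "(\<Sum>x\<in>basis n. w x * cnj (U x y) * U x y') = (\<Sum>x\<in>Pow {..<n}. \<Prod>l<n.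
          (\<lambda>l p. \<omega> l p * (cnj (ub \<beta> p (l\<in>y)) * ub \<beta> p (l\<in>y'))) l (l \<in> x))"
      unfolding basis_def w_def U_def cnj_prod prod.distrib[symmetric] by (simp add: mult_ac)
    also have "\<dots> = (\<Prod>l<n. Gw (\<omega> l) \<beta> (l\<in>y) (l\<in>y'))"
      by (subst sum_pow_prod) (simp_all add: Gw_def)
    finally have "(\<Sum>x\<in>basis n. w x * cnj (U x y) * U x y') = (\<Prod>l<n. Gw (\<omega> l) \<beta> (l\<in>y) (l\<in>y'))" .
    then show "(\<Sum>x\<in>basis n. w x * cnj (U x y) * U x y' * (cnj (\<phi> y) * \<phi> y'))
       = cnj (\<phi> y) * \<phi> y' * (\<Prod>l<n. Gw (\<omega> l) \<beta> (l\<in>y) (l\<in>y'))"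
      unfolding sum_distrib_right[symmetric] by (simp only: mult.commute)
  qed
  finally show ?thesis unfolding w_def \<phi>_def .
qed

definition bits :: "nat \<Rightarrow> nat \<Rightarrow> bool \<Rightarrow> bool \<Rightarrow> nat set" where
  "bits j k a b = (if a then {j} else {}) \<union> (if b then {k} else {})"

lemma split2:
  assumes "finite A'" "j \<notin> A'" "k \<notin> A'" "j \<noteq> k"
  shows "(\<Sum>y\<in>Pow (insert j (insert k A')). F y) = (\<Sum>a\<in>UNIV. \<Sum>b\<in>UNIV. \<Sum>y\<in>Pow A'. F (y \<union> bits j k a b))"
proof -
  have "(\<Sum>y\<in>Pow (insert j (insert k A')). F y) = (\<Sum>y\<in>Pow (insert k A'). F y + F (insert j y))"
    using assms by (intro sum_Pow_insert) auto
  also have "\<dots> = (\<Sum>y\<in>Pow A'. (F y + F (insert j y)) + (F (insert k y) + F (insert j (insert k y))))"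
    using assms by (intro sum_Pow_insert) auto
  also have "\<dots> = (\<Sum>a\<in>UNIV. \<Sum>b\<in>UNIV. \<Sum>y\<in>Pow A'. F (y \<union> bits j k a b))"
    by (simp add: UNIV_bool bits_def sum.distrib insert_commute add_ac)
  finally show ?thesis .
qed

lemma bits_mem:
  assumes "Y \<subseteq> A'" "j \<notin> A'" "k \<notin> A'" "j \<noteq> k"
  shows "j \<in> Y \<union> bits j k a b \<longleftrightarrow> a" "k \<in> Y \<union> bits j k a b \<longleftrightarrow> b"
    "l \<in> A' \<Longrightarrow> l \<in> Y \<union> bits j k a b \<longleftrightarrow> l \<in> Y" "(Y \<union> bits j k a b) \<inter> A' = Y"
  using assms unfolding bits_def by auto

lemma reduce:
  fixes \<phi> :: "nat set \<Rightarrow> complex"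
  assumes jn: "j < n" and kn: "k < n" and jk: "j \<noteq> k"
  defines "A' \<equiv> {..<n} - {j, k}"
  shows "(\<Sum>y\<in>basis n. \<Sum>y'\<in>basis n. cnj (\<phi> y) * \<phi> y' *
      (\<Prod>l<n. Gw (if l = j then \<omega>j else if l = k then \<omega>k else (\<lambda>_. 1)) \<beta> (l\<in>y) (l\<in>y')))
   = (\<Sum>a\<in>UNIV. \<Sum>b\<in>UNIV. \<Sum>a'\<in>UNIV. \<Sum>b'\<in>UNIV. Gw \<omega>j \<beta> a a' * Gw \<omega>k \<beta> b b' *
        (\<Sum>Y\<in>Pow A'. cnj (\<phi> (Y \<union> bits j k a b)) * \<phi> (Y \<union> bits j k a' b')))"
proof -
  have fA: "finite A'" and jA: "j \<notin> A'" and kA: "k \<notin> A'" unfolding A'_def by auto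
  have An: "{..<n} = insert j (insert k A')" using jn kn unfolding A'_def by auto
  have bn: "basis n = Pow (insert j (insert k A'))" unfolding basis_def An ..
  define Gj where "Gj = Gw \<omega>j \<beta>"
  define Gk where "Gk = Gw \<omega>k \<beta>"
  have P: "(\<Prod>l<n. Gw (if l = j then \<omega>j else if l = k then \<omega>k else (\<lambda>_. 1)) \<beta> (l\<in>y) (l\<in>y'))
     = Gj (j\<in>y) (j\<in>y') * Gk (k\<in>y) (k\<in>y') * (if y' \<inter> A' = y \<inter> A' then 1 else 0)" for y y'
  proof -
    have "(\<Prod>l<n. Gw (if l = j then \<omega>j else if l = k then \<omega>k else (\<lambda>_. 1)) \<beta> (l\<in>y) (l\<in>y'))
       = Gj (j\<in>y) (j\<in>y') * (Gk (k\<in>y) (k\<in>y') * (\<Prod>l\<in>A'. Gw (if l = j then \<omega>j else if l = k then \<omega>k else (\<lambda>_. 1)) \<beta> (l\<in>y) (l\<in>y')))"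
      unfolding An using fA jA kA jk by (simp add: Gj_def Gk_def)
    also have "(\<Prod>l\<in>A'. Gw (if l = j then \<omega>j else if l = k then \<omega>k else (\<lambda>_. 1)) \<beta> (l\<in>y) (l\<in>y'))
       = (\<Prod>l\<in>A'. if (l\<in>y) = (l\<in>y') then 1 else 0)"
      using jA kA by (intro prod.cong refl) (auto simp: Gw_one)
    also have "\<dots> = (if y' \<inter> A' = y \<inter> A' then 1 else 0)"
    proof (cases "y' \<inter> A' = y \<inter> A'")
      case True then show ?thesis by (auto intro!: prod.neutral) 
    next
      case False
      then obtain l where "l \<in> A'" "(l\<in>y) \<noteq> (l\<in>y')" by blast
      then show ?thesis using False fA by (auto intro!: prod_zero)
    qed
    finally show ?thesis by (simp add: mult_ac)
  qed
  have inner: "(\<Sum>y'\<in>basis n. cnj (\<phi> y) * \<phi> y' *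
      (\<Prod>l<n. Gw (if l = j then \<omega>j else if l = k then \<omega>k else (\<lambda>_. 1)) \<beta> (l\<in>y) (l\<in>y')))
    = (\<Sum>a'\<in>UNIV. \<Sum>b'\<in>UNIV. cnj (\<phi> y) * \<phi> ((y \<inter> A') \<union> bits j k a' b') * (Gj (j\<in>y) a' * Gk (k\<in>y) b'))" for y
  proof -
    have "(\<Sum>y'\<in>basis n. cnj (\<phi> y) * \<phi> y' *
      (\<Prod>l<n. Gw (if l = j then \<omega>j else if l = k then \<omega>k else (\<lambda>_. 1)) \<beta> (l\<in>y) (l\<in>y')))
      = (\<Sum>a'\<in>UNIV. \<Sum>b'\<in>UNIV. \<Sum>Y'\<in>Pow A'. cnj (\<phi> y) * \<phi> (Y' \<union> bits j k a' b') *
           (Gj (j\<in>y) a' * Gk (k\<in>y) b' * (if Y' = y \<inter> A' then 1 else 0)))"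
      unfolding bn split2[OF fA jA kA jk] P
    proof (intro sum.cong refl)
      fix a' b' Y' assume "Y' \<in> Pow A'"
      then have Y': "Y' \<subseteq> A'" by auto
      show "cnj (\<phi> y) * \<phi> (Y' \<union> bits j k a' b') *
         (Gj (j \<in> y) (j \<in> Y' \<union> bits j k a' b') * Gk (k \<in> y) (k \<in> Y' \<union> bits j k a' b') *
          (if (Y' \<union> bits j k a' b') \<inter> A' = y \<inter> A' then 1 else 0))
         = cnj (\<phi> y) * \<phi> (Y' \<union> bits j k a' b') *
           (Gj (j\<in>y) a' * Gk (k\<in>y) b' * (if Y' = y \<inter> A' then 1 else 0))"
        unfolding bits_mem[OF Y' jA kA jk] ..
    qed
    also have "\<dots> = (\<Sum>a'\<in>UNIV. \<Sum>b'\<in>UNIV. cnj (\<phi> y) * \<phi> ((y \<inter> A') \<union> bits j k a' b') * (Gj (j\<in>y) a' * Gk (k\<in>y) b'))"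
    proof (intro sum.cong refl)
      fix a' b'
      have "(\<Sum>Y'\<in>Pow A'. cnj (\<phi> y) * \<phi> (Y' \<union> bits j k a' b') *
           (Gj (j\<in>y) a' * Gk (k\<in>y) b' * (if Y' = y \<inter> A' then 1 else 0)))
          = (\<Sum>Y'\<in>Pow A'. if Y' = y \<inter> A' then cnj (\<phi> y) * \<phi> (Y' \<union> bits j k a' b') * (Gj (j\<in>y) a' * Gk (k\<in>y) b') else 0)"
        by (intro sum.cong refl) auto
      also have "\<dots> = cnj (\<phi> y) * \<phi> ((y \<inter> A') \<union> bits j k a' b') * (Gj (j\<in>y) a' * Gk (k\<in>y) b')"
        using fA by (simp add: sum.delta')
      finally show "(\<Sum>Y'\<in>Pow A'. cnj (\<phi> y) * \<phi> (Y' \<union> bits j k a' b') *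
           (Gj (j\<in>y) a' * Gk (k\<in>y) b' * (if Y' = y \<inter> A' then 1 else 0)))
          = cnj (\<phi> y) * \<phi> ((y \<inter> A') \<union> bits j k a' b') * (Gj (j\<in>y) a' * Gk (k\<in>y) b')" .
    qed
    finally show ?thesis .
  qed
  have "(\<Sum>y\<in>basis n. \<Sum>y'\<in>basis n. cnj (\<phi> y) * \<phi> y' *
      (\<Prod>l<n. Gw (if l = j then \<omega>j else if l = k then \<omega>k else (\<lambda>_. 1)) \<beta> (l\<in>y) (l\<in>y')))
    = (\<Sum>a\<in>UNIV. \<Sum>b\<in>UNIV. \<Sum>Y\<in>Pow A'. \<Sum>a'\<in>UNIV. \<Sum>b'\<in>UNIV.
         Gj a a' * Gk b b' * (cnj (\<phi> (Y \<union> bits j k a b)) * \<phi> (Y \<union> bits j k a' b')))"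
    unfolding inner unfolding bn split2[OF fA jA kA jk]
  proof (intro sum.cong refl)
    fix a b Y a' b' assume "Y \<in> Pow A'"
    then have Y: "Y \<subseteq> A'" by auto
    show "cnj (\<phi> (Y \<union> bits j k a b)) * \<phi> ((Y \<union> bits j k a b) \<inter> A' \<union> bits j k a' b') *
          (Gj (j \<in> Y \<union> bits j k a b) a' * Gk (k \<in> Y \<union> bits j k a b) b')
        = Gj a a' * Gk b b' * (cnj (\<phi> (Y \<union> bits j k a b)) * \<phi> (Y \<union> bits j k a' b'))"
      unfolding bits_mem[OF Y jA kA jk] by (simp only: mult_ac)
  qed
  also have "\<dots> = (\<Sum>a\<in>UNIV. \<Sum>b\<in>UNIV. \<Sum>a'\<in>UNIV. \<Sum>b'\<in>UNIV. \<Sum>Y\<in>Pow A'.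
         Gj a a' * Gk b b' * (cnj (\<phi> (Y \<union> bits j k a b)) * \<phi> (Y \<union> bits j k a' b')))"
  proof (intro sum.cong refl)
    fix a b
    show "(\<Sum>Y\<in>Pow A'. \<Sum>a'\<in>UNIV. \<Sum>b'\<in>UNIV.
         Gj a a' * Gk b b' * (cnj (\<phi> (Y \<union> bits j k a b)) * \<phi> (Y \<union> bits j k a' b')))
       = (\<Sum>a'\<in>UNIV. \<Sum>b'\<in>UNIV. \<Sum>Y\<in>Pow A'.
         Gj a a' * Gk b b' * (cnj (\<phi> (Y \<union> bits j k a b)) * \<phi> (Y \<union> bits j k a' b')))"
      by (subst sum.swap, rule sum.cong[OF refl], rule sum.swap)
  qed
  also have "\<dots> = (\<Sum>a\<in>UNIV. \<Sum>b\<in>UNIV. \<Sum>a'\<in>UNIV. \<Sum>b'\<in>UNIV. Gw \<omega>j \<beta> a a' * Gw \<omega>k \<beta> b b' *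
        (\<Sum>Y\<in>Pow A'. cnj (\<phi> (Y \<union> bits j k a b)) * \<phi> (Y \<union> bits j k a' b')))"
    by (simp add: sum_distrib_left Gj_def Gk_def)
  finally show ?thesis .
qed

lemma edges_finite: "simple_graph n adj \<Longrightarrow> finite (edges adj)"
  unfolding simple_graph_def edges_def
  by (rule finite_subset[of _ "{..<n} \<times> {..<n}"]) auto

lemma edge_prod:
  fixes h :: "nat \<Rightarrow> nat \<Rightarrow> complex"
  assumes sg: "simple_graph n adj" and jk: "(j, k) \<in> edges adj"
    and hs: "\<And>p q. h p q = h q p"
    and h1: "\<And>p q. p \<notin> {j, k} \<Longrightarrow> q \<notin> {j, k} \<Longrightarrow> h p q = 1"
  shows "(\<Prod>e\<in>edges adj. h (fst e) (snd e))
       = h j k * (\<Prod>u\<in>{u. adj j u} - {k}. h j u) * (\<Prod>u\<in>{u. adj k u} - {j}. h k u)"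
proof -
  have jlk: "j < k" and ajk: "adj j k" using jk by (auto simp: edges_def)
  have sym: "adj p q \<Longrightarrow> adj q p" and irr: "adj p q \<Longrightarrow> p \<noteq> q" for p q
    using sg[unfolded simple_graph_def, rule_format, of p q] by simp_all
  define mj where "mj u = (min j u, max j u)" for u
  define mk where "mk u = (min k u, max k u)" for u
  define Nj where "Nj = {u. adj j u} - {k}"
  define Nk where "Nk = {u. adj k u} - {j}"
  define T where "T = insert (j, k) (mj ` Nj \<union> mk ` Nk)"
  have fE: "finite (edges adj)" by (rule edges_finite[OF sg])
  have ltn: "adj p q \<Longrightarrow> q < n" for p q
    using sg[unfolded simple_graph_def, rule_format, of p q] by simp
  have fNj: "finite Nj" unfolding Nj_def
    by (rule finite_subset[of _ "{..<n}"]) (auto dest: ltn)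
  have fNk: "finite Nk" unfolding Nk_def
    by (rule finite_subset[of _ "{..<n}"]) (auto dest: ltn)
  have me: "(min p q, max p q) \<in> edges adj" if "adj p q" for p q
    using that sym[OF that] irr[OF that] by (cases "p < q") (auto simp: edges_def min_def max_def)
  have TE: "T \<subseteq> edges adj"
    unfolding T_def mj_def mk_def Nj_def Nk_def using jk me by auto
  have rest: "h (fst e) (snd e) = 1" if "e \<in> edges adj - T" for e
  proof -
    have eE: "e \<in> edges adj" using that by blast
    obtain p q where e: "e = (p, q)" "p < q" "adj p q"
      using eE by (cases e) (auto simp: edges_def)
    have eT: "e \<notin> T" using that by auto
    have "p \<noteq> j"
    proof
      assume pj: "p = j"
      show False
      proof (cases "q = k")
        case True then show False using eT e pj unfolding T_def by auto
      next
        case False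
        then have "q \<in> Nj" "mj q = e" using e pj unfolding Nj_def mj_def by auto
        then show False using eT unfolding T_def by blast
      qed
    qed
    moreover have "p \<noteq> k"
    proof
      assume pk: "p = k"
      then have "q \<in> Nk" "mk q = e" using e jlk unfolding Nk_def mk_def by auto
      then show False using eT unfolding T_def by blast
    qed
    moreover have "q \<noteq> j"
    proof
      assume qj: "q = j"
      then have "p \<in> Nj" "mj p = e" using e jlk sym[of p q] unfolding Nj_def mj_def by auto
      then show False using eT unfolding T_def by blast
    qed
    moreover have "q \<noteq> k"
    proof
      assume qk: "q = k"
      show False
      proof (cases "p = j")
        case True then show False using eT e qk unfolding T_def by auto
      next
        case False
        then have "p \<in> Nk" "mk p = e" using e qk sym[of p q] unfolding Nk_def mk_def by auto
        then show False using eT unfolding T_def by blast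
      qed
    qed
    ultimately show ?thesis using e h1 by auto
  qed
  have "(\<Prod>e\<in>edges adj. h (fst e) (snd e)) = (\<Prod>e\<in>T. h (fst e) (snd e))"
    using prod.mono_neutral_right[OF fE TE, of "\<lambda>e. h (fst e) (snd e)"] rest by blast
  also have "\<dots> = h j k * ((\<Prod>e\<in>mj ` Nj. h (fst e) (snd e)) * (\<Prod>e\<in>mk ` Nk. h (fst e) (snd e)))"
  proof -
    have n1: "(j, k) \<notin> mj ` Nj \<union> mk ` Nk"
      unfolding mj_def mk_def Nj_def Nk_def by (auto simp: min_def max_def dest: irr split: if_splits)
    have d: "mj ` Nj \<inter> mk ` Nk = {}"
      unfolding mj_def mk_def Nj_def Nk_def using jlk by (auto simp: min_def max_def dest: irr split: if_splits)
    show ?thesis unfolding T_def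
      using n1 d fNj fNk by (simp add: prod.union_disjoint)
  qed
  also have "(\<Prod>e\<in>mj ` Nj. h (fst e) (snd e)) = (\<Prod>u\<in>Nj. h j u)"
  proof -
    have "inj_on mj Nj" unfolding inj_on_def mj_def Nj_def by (auto simp: min_def max_def dest: irr split: if_splits)
    then have "(\<Prod>e\<in>mj ` Nj. h (fst e) (snd e)) = (\<Prod>u\<in>Nj. h (fst (mj u)) (snd (mj u)))"
      by (simp add: prod.reindex)
    also have "\<dots> = (\<Prod>u\<in>Nj. h j u)"
      by (intro prod.cong refl) (auto simp: mj_def min_def max_def hs)
    finally show ?thesis .
  qed
  also have "(\<Prod>e\<in>mk ` Nk. h (fst e) (snd e)) = (\<Prod>u\<in>Nk. h k u)"
  proof -
    have "inj_on mk Nk" unfolding inj_on_def mk_def Nk_def by (auto simp: min_def max_def dest: irr split: if_splits)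
    then have "(\<Prod>e\<in>mk ` Nk. h (fst e) (snd e)) = (\<Prod>u\<in>Nk. h (fst (mk u)) (snd (mk u)))"
      by (simp add: prod.reindex)
    also have "\<dots> = (\<Prod>u\<in>Nk. h k u)"
      by (intro prod.cong refl) (auto simp: mk_def min_def max_def hs)
    finally show ?thesis .
  qed
  finally show ?thesis unfolding Nj_def Nk_def by (simp add: mult_ac)
qed

definition tau :: "bool \<Rightarrow> bool \<Rightarrow> real" where "tau p q = (1 - sgr p * sgr q) / 2"

definition fx :: "real \<Rightarrow> bool \<Rightarrow> bool \<Rightarrow> bool \<Rightarrow> bool \<Rightarrow> complex" where
  "fx \<gamma> p q p' q' = exp (- (\<i> * complex_of_real \<gamma>) * complex_of_real (tau p' q' - tau p q))"

lemma phi_pair0: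
  "cnj (phi n adj \<gamma> y) * phi n adj \<gamma> y'
   = (1/2^n) * (\<Prod>e\<in>edges adj. fx \<gamma> (fst e \<in> y) (snd e \<in> y) (fst e \<in> y') (snd e \<in> y'))"
proof -
  have s: "complex_of_real (1 / sqrt (2 ^ n)) * complex_of_real (1 / sqrt (2 ^ n)) = 1 / 2^n"
    by (simp flip: of_real_mult)
  have "cnj (phi n adj \<gamma> y) * phi n adj \<gamma> y'
     = (complex_of_real (1 / sqrt (2 ^ n)) * complex_of_real (1 / sqrt (2 ^ n))) *
       (exp (\<i> * complex_of_real \<gamma> * complex_of_real (cutr adj y)) * exp (- (\<i> * complex_of_real \<gamma>) * complex_of_real (cutr adj y')))"
    unfolding phi_def by (simp add: exp_cnj mult_ac)
  also have "exp (\<i> * complex_of_real \<gamma> * complex_of_real (cutr adj y)) * exp (- (\<i> * complex_of_real \<gamma>) * complex_of_real (cutr adj y'))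
      = exp (- (\<i> * complex_of_real \<gamma>) * complex_of_real (cutr adj y' - cutr adj y))"
    by (simp add: exp_add[symmetric] algebra_simps)
  also have "cutr adj y' - cutr adj y = (\<Sum>e\<in>edges adj. tau (fst e \<in> y') (snd e \<in> y') - tau (fst e \<in> y) (snd e \<in> y))"
    unfolding cutr_def tau_def by (simp add: sum_subtractf)
  also have "exp (- (\<i> * complex_of_real \<gamma>) * complex_of_real (\<Sum>e\<in>edges adj. tau (fst e \<in> y') (snd e \<in> y') - tau (fst e \<in> y) (snd e \<in> y)))
      = (\<Prod>e\<in>edges adj. fx \<gamma> (fst e \<in> y) (snd e \<in> y) (fst e \<in> y') (snd e \<in> y'))"
  proof (cases "finite (edges adj)")
    case True
    then show ?thesis unfolding fx_def of_real_sum sum_distrib_left by (simp add: exp_sum)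
  next
    case False
    then show ?thesis by simp
  qed
  finally show ?thesis unfolding s .
qed

lemma phi_pair:
  assumes sg: "simple_graph n adj" and jk: "(j, k) \<in> edges adj"
    and Y: "Y \<subseteq> {..<n} - {j, k}"
  shows "cnj (phi n adj \<gamma> (Y \<union> bits j k a b)) * phi n adj \<gamma> (Y \<union> bits j k a' b')
   = (1/2^n) * fx \<gamma> a b a' b' * (\<Prod>u\<in>{u. adj j u} - {k}. fx \<gamma> a (u\<in>Y) a' (u\<in>Y))
       * (\<Prod>u\<in>{u. adj k u} - {j}. fx \<gamma> b (u\<in>Y) b' (u\<in>Y))"
proof -
  define y where "y = Y \<union> bits j k a b"
  define y' where "y' = Y \<union> bits j k a' b'"
  have jk': "j \<noteq> k" using jk by (auto simp: edges_def)
  have jA: "j \<notin> {..<n} - {j, k}" and kA: "k \<notin> {..<n} - {j, k}" by auto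
  have my: "p \<notin> {j, k} \<Longrightarrow> (p \<in> y) = (p \<in> Y)" "p \<notin> {j, k} \<Longrightarrow> (p \<in> y') = (p \<in> Y)" for p
    unfolding y_def y'_def bits_def by auto
  have hs: "fx \<gamma> (p \<in> y) (q \<in> y) (p \<in> y') (q \<in> y') = fx \<gamma> (q \<in> y) (p \<in> y) (q \<in> y') (p \<in> y')" for p q
    unfolding fx_def tau_def by (simp add: mult.commute)
  have h1: "fx \<gamma> (p \<in> y) (q \<in> y) (p \<in> y') (q \<in> y') = 1" if "p \<notin> {j, k}" "q \<notin> {j, k}" for p q
    unfolding fx_def my[OF that(1)] my[OF that(2)] by simp
  have "cnj (phi n adj \<gamma> y) * phi n adj \<gamma> y'
     = (1/2^n) * (fx \<gamma> (j \<in> y) (k \<in> y) (j \<in> y') (k \<in> y') *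
          (\<Prod>u\<in>{u. adj j u} - {k}. fx \<gamma> (j \<in> y) (u \<in> y) (j \<in> y') (u \<in> y')) *
          (\<Prod>u\<in>{u. adj k u} - {j}. fx \<gamma> (k \<in> y) (u \<in> y) (k \<in> y') (u \<in> y')))"
    unfolding phi_pair0
    using edge_prod[OF sg jk, of "\<lambda>p q. fx \<gamma> (p \<in> y) (q \<in> y) (p \<in> y') (q \<in> y')"] hs h1 by simp
  also have "\<dots> = (1/2^n) * fx \<gamma> a b a' b' * (\<Prod>u\<in>{u. adj j u} - {k}. fx \<gamma> a (u\<in>Y) a' (u\<in>Y))
       * (\<Prod>u\<in>{u. adj k u} - {j}. fx \<gamma> b (u\<in>Y) b' (u\<in>Y))"
  proof -
    have irr: "\<not> adj p p" for p using sg unfolding simple_graph_def by blast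
    have p1: "(\<Prod>u\<in>{u. adj j u} - {k}. fx \<gamma> (j \<in> y) (u \<in> y) (j \<in> y') (u \<in> y')) = (\<Prod>u\<in>{u. adj j u} - {k}. fx \<gamma> a (u\<in>Y) a' (u\<in>Y))"
    proof (intro prod.cong refl)
      fix u assume "u \<in> {u. adj j u} - {k}"
      then have u: "u \<notin> {j, k}" using irr by auto
      show "fx \<gamma> (j \<in> y) (u \<in> y) (j \<in> y') (u \<in> y') = fx \<gamma> a (u\<in>Y) a' (u\<in>Y)"
        unfolding my[OF u] unfolding y_def y'_def bits_mem[OF Y jA kA jk'] ..
    qed
    have p2: "(\<Prod>u\<in>{u. adj k u} - {j}. fx \<gamma> (k \<in> y) (u \<in> y) (k \<in> y') (u \<in> y')) = (\<Prod>u\<in>{u. adj k u} - {j}. fx \<gamma> b (u\<in>Y) b' (u\<in>Y))"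
    proof (intro prod.cong refl)
      fix u assume "u \<in> {u. adj k u} - {j}"
      then have u: "u \<notin> {j, k}" using irr by auto
      show "fx \<gamma> (k \<in> y) (u \<in> y) (k \<in> y') (u \<in> y') = fx \<gamma> b (u\<in>Y) b' (u\<in>Y)"
        unfolding my[OF u] unfolding y_def y'_def bits_mem[OF Y jA kA jk'] ..
    qed
    show ?thesis unfolding p1 p2 unfolding y_def y'_def bits_mem[OF Y jA kA jk'] by (simp add: mult_ac)
  qed
  finally show ?thesis unfolding y_def y'_def .
qed

lemma prod_count4:
  fixes F :: "'a \<Rightarrow> complex"
  assumes fA: "finite A" and P: "P \<subseteq> A" and Q: "Q \<subseteq> A"
    and F: "\<And>u. F u = (if u \<in> P then (if u \<in> Q then c1 else c2) else (if u \<in> Q then c3 else c4))"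
  shows "(\<Prod>u\<in>A. F u) = c1 ^ card (P \<inter> Q) * c2 ^ card (P - Q) * c3 ^ card (Q - P) * c4 ^ card (A - (P \<union> Q))"
proof -
  have fP: "finite (A \<inter> P)" "finite (A - P)" using fA by auto
  have "(\<Prod>u\<in>A. F u) = (\<Prod>u\<in>A \<inter> P. F u) * (\<Prod>u\<in>A - P. F u)"
    by (rule prod.Int_Diff[OF fA])
  also have "(\<Prod>u\<in>A \<inter> P. F u) = (\<Prod>u\<in>A \<inter> P \<inter> Q. F u) * (\<Prod>u\<in>A \<inter> P - Q. F u)"
    by (rule prod.Int_Diff[OF fP(1)])
  also have "(\<Prod>u\<in>A - P. F u) = (\<Prod>u\<in>(A - P) \<inter> Q. F u) * (\<Prod>u\<in>(A - P) - Q. F u)"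
    by (rule prod.Int_Diff[OF fP(2)])
  also have "A \<inter> P \<inter> Q = P \<inter> Q" using P by auto
  also have "A \<inter> P - Q = P - Q" using P by auto
  also have "(A - P) \<inter> Q = Q - P" using Q by auto
  also have "(A - P) - Q = A - (P \<union> Q)" by auto
  also have "(\<Prod>u\<in>P \<inter> Q. F u) = (\<Prod>u\<in>P \<inter> Q. c1)" by (rule prod.cong) (auto simp: F)
  also have "(\<Prod>u\<in>P - Q. F u) = (\<Prod>u\<in>P - Q. c2)" by (rule prod.cong) (auto simp: F)
  also have "(\<Prod>u\<in>Q - P. F u) = (\<Prod>u\<in>Q - P. c3)" by (rule prod.cong) (auto simp: F)
  also have "(\<Prod>u\<in>A - (P \<union> Q). F u) = (\<Prod>u\<in>A - (P \<union> Q). c4)" by (rule prod.cong) (auto simp: F)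
  finally show ?thesis by (simp only: prod_constant mult_ac)
qed

lemma sumY:
  fixes f g :: "bool \<Rightarrow> complex"
  assumes fA: "finite A" and P: "P \<subseteq> A" and Q: "Q \<subseteq> A"
  shows "(\<Sum>Y\<in>Pow A. (\<Prod>u\<in>P. f (u\<in>Y)) * (\<Prod>u\<in>Q. g (u\<in>Y)))
    = (f True * g True + f False * g False) ^ card (P \<inter> Q) * (f True + f False) ^ card (P - Q)
      * (g True + g False) ^ card (Q - P) * 2 ^ card (A - (P \<union> Q))"
proof -
  define h where "h u p = (if u \<in> P then f p else 1) * (if u \<in> Q then g p else 1)" for u p
  have "(\<Sum>Y\<in>Pow A. (\<Prod>u\<in>P. f (u\<in>Y)) * (\<Prod>u\<in>Q. g (u\<in>Y))) = (\<Sum>Y\<in>Pow A. \<Prod>u\<in>A. h u (u \<in> Y))"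
  proof (intro sum.cong refl)
    fix Y
    show "(\<Prod>u\<in>P. f (u\<in>Y)) * (\<Prod>u\<in>Q. g (u\<in>Y)) = (\<Prod>u\<in>A. h u (u \<in> Y))"
      unfolding prod_subset_if[OF fA P] prod_subset_if[OF fA Q] h_def prod.distrib ..
  qed
  also have "\<dots> = (\<Prod>u\<in>A. h u True + h u False)" by (rule sum_pow_prod[OF fA])
  also have "\<dots> = (f True * g True + f False * g False) ^ card (P \<inter> Q) * (f True + f False) ^ card (P - Q)
      * (g True + g False) ^ card (Q - P) * 2 ^ card (A - (P \<union> Q))"
    by (rule prod_count4[OF fA P Q]) (simp add: h_def)
  finally show ?thesis .
qed

lemma counts:
  assumes r3: "regular3 n adj" and jk: "(j, k) \<in> edges adj"
  defines "Nj \<equiv> {u. adj j u} - {k}" and "Nk \<equiv> {u. adj k u} - {j}" and "A' \<equiv> {..<n} - {j, k}"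
  shows "card (Nj \<inter> Nk) = edge_type adj (j, k)" "card (Nj - Nk) = 2 - edge_type adj (j, k)"
    "card (Nk - Nj) = 2 - edge_type adj (j, k)" "card (A' - (Nj \<union> Nk)) + (6 - edge_type adj (j, k)) = n"
    "Nj \<subseteq> A'" "Nk \<subseteq> A'" "edge_type adj (j, k) \<le> 2"
proof -
  have sg: "simple_graph n adj" using r3 by (simp add: regular3_def)
  have sym: "adj p q \<Longrightarrow> adj q p" and irr: "adj p q \<Longrightarrow> p \<noteq> q" and ltn: "adj p q \<Longrightarrow> p < n" for p q
    using sg[unfolded simple_graph_def, rule_format, of p q] by simp_all
  have jlk: "j < k" and ajk: "adj j k" using jk by (auto simp: edges_def)
  have jn: "j < n" and kn: "k < n" using ltn[OF ajk] ltn[OF sym[OF ajk]] by auto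
  have c3: "card {u. adj p u} = 3" if "p < n" for p using r3 that by (simp add: regular3_def)
  have fN: "finite {u. adj p u}" for p by (rule finite_subset[of _ "{..<n}"]) (auto dest: sym ltn)
  have cNj: "card Nj = 2" unfolding Nj_def using c3[OF jn] ajk by (simp add: card_Diff_singleton)
  have cNk: "card Nk = 2" unfolding Nk_def using c3[OF kn] sym[OF ajk] by (simp add: card_Diff_singleton)
  have fNj: "finite Nj" and fNk: "finite Nk" unfolding Nj_def Nk_def using fN by auto
  have I: "Nj \<inter> Nk = {u. adj j u \<and> adj k u}" unfolding Nj_def Nk_def by (auto dest: irr)
  show t: "card (Nj \<inter> Nk) = edge_type adj (j, k)" unfolding I edge_type_def by simp
  have tle: "card (Nj \<inter> Nk) \<le> 2" using card_mono[OF fNj, of "Nj \<inter> Nk"] cNj by auto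
  then show "edge_type adj (j, k) \<le> 2" using t by simp
  show "card (Nj - Nk) = 2 - edge_type adj (j, k)"
    using card_Diff_subset_Int[of Nj Nk] fNj cNj t by simp
  show "card (Nk - Nj) = 2 - edge_type adj (j, k)"
    using card_Diff_subset_Int[of Nk Nj] fNk cNk t by (simp add: Int_commute)
  show sj: "Nj \<subseteq> A'" unfolding Nj_def A'_def by (auto dest: irr sym ltn)
  show sk: "Nk \<subseteq> A'" unfolding Nk_def A'_def by (auto dest: irr sym ltn)
  have cA: "card A' = n - 2"
  proof -
    have "card {j, k} = 2" using jlk by simp
    then show ?thesis unfolding A'_def using jn kn by (subst card_Diff_subset) auto
  qed
  have U: "card (Nj \<union> Nk) + card (Nj \<inter> Nk) = 4" using card_Un_Int[OF fNj fNk] cNj cNk by simp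
  have fA: "finite A'" unfolding A'_def by simp
  have Ule: "card (Nj \<union> Nk) \<le> card A'" using sj sk by (intro card_mono[OF fA]) auto
  have "card (A' - (Nj \<union> Nk)) = card A' - card (Nj \<union> Nk)"
    using sj sk fNj fNk by (intro card_Diff_subset) auto
  then show "card (A' - (Nj \<union> Nk)) + (6 - edge_type adj (j, k)) = n"
    using cA U Ule tle t jlk kn by linarith
qed

definition qs :: "real \<Rightarrow> bool \<Rightarrow> bool \<Rightarrow> complex" where
  "qs \<gamma> a a' = fx \<gamma> a True a' True + fx \<gamma> a False a' False"
definition qc :: "real \<Rightarrow> bool \<Rightarrow> bool \<Rightarrow> bool \<Rightarrow> bool \<Rightarrow> complex" where
  "qc \<gamma> a a' b b' = fx \<gamma> a True a' True * fx \<gamma> b True b' True + fx \<gamma> a False a' False * fx \<gamma> b False b' False"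

definition Wf :: "(bool \<Rightarrow> complex) \<Rightarrow> (bool \<Rightarrow> complex) \<Rightarrow> real \<Rightarrow> real \<Rightarrow> nat \<Rightarrow> complex" where
  "Wf \<omega>j \<omega>k \<gamma> \<beta> t = (\<Sum>a\<in>UNIV. \<Sum>b\<in>UNIV. \<Sum>a'\<in>UNIV. \<Sum>b'\<in>UNIV. Gw \<omega>j \<beta> a a' * Gw \<omega>k \<beta> b b' *
      (fx \<gamma> a b a' b' * qc \<gamma> a a' b b' ^ t * qs \<gamma> a a' ^ (2 - t) * qs \<gamma> b b' ^ (2 - t) / 2 ^ (6 - t)))"

lemma edge_expect:
  assumes r3: "regular3 n adj" and jk: "(j, k) \<in> edges adj"
  shows "(\<Sum>x\<in>basis n. \<omega>j (j\<in>x) * \<omega>k (k\<in>x) * (cnj (qaoa_state n adj \<gamma> \<beta> x) * qaoa_state n adj \<gamma> \<beta> x))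
     = Wf \<omega>j \<omega>k \<gamma> \<beta> (edge_type adj (j, k))"
proof -
  define Nj where "Nj = {u. adj j u} - {k}"
  define Nk where "Nk = {u. adj k u} - {j}"
  define A' where "A' = {..<n} - {j, k}"
  define t where "t = edge_type adj (j, k)"
  note cs = counts[OF r3 jk, folded Nj_def Nk_def A'_def t_def]
  have sg: "simple_graph n adj" using r3 by (simp add: regular3_def)
  have sym: "adj p q \<Longrightarrow> adj q p" and ltn: "adj p q \<Longrightarrow> p < n" for p q
    using sg[unfolded simple_graph_def, rule_format, of p q] by simp_all
  have jlk: "j < k" and ajk: "adj j k" using jk by (auto simp: edges_def)
  have jn: "j < n" and kn: "k < n" using ltn[OF ajk] ltn[OF sym[OF ajk]] by auto
  have jk': "j \<noteq> k" using jlk by simp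
  have fA: "finite A'" unfolding A'_def by simp
  have An: "{..<n} = insert j (insert k A')" using jn kn unfolding A'_def by auto
  define \<omega> where "\<omega> l = (if l = j then \<omega>j else if l = k then \<omega>k else (\<lambda>_. 1))" for l
  have w: "\<omega>j (j\<in>x) * \<omega>k (k\<in>x) = (\<Prod>l<n. \<omega> l (l\<in>x))" for x
  proof -
    have "(\<Prod>l\<in>A'. \<omega> l (l\<in>x)) = 1" unfolding \<omega>_def A'_def by (intro prod.neutral) auto
    then show ?thesis unfolding An using fA jk' by (simp add: A'_def \<omega>_def)
  qed
  have inner: "(\<Sum>Y\<in>Pow A'. cnj (phi n adj \<gamma> (Y \<union> bits j k a b)) * phi n adj \<gamma> (Y \<union> bits j k a' b'))
     = fx \<gamma> a b a' b' * qc \<gamma> a a' b b' ^ t * qs \<gamma> a a' ^ (2 - t) * qs \<gamma> b b' ^ (2 - t) / 2 ^ (6 - t)" for a b a' b'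
  proof -
    have "(\<Sum>Y\<in>Pow A'. cnj (phi n adj \<gamma> (Y \<union> bits j k a b)) * phi n adj \<gamma> (Y \<union> bits j k a' b'))
       = (\<Sum>Y\<in>Pow A'. (1/2^n) * fx \<gamma> a b a' b' * ((\<Prod>u\<in>Nj. fx \<gamma> a (u\<in>Y) a' (u\<in>Y)) * (\<Prod>u\<in>Nk. fx \<gamma> b (u\<in>Y) b' (u\<in>Y))))"
    proof (intro sum.cong refl)
      fix Y assume "Y \<in> Pow A'"
      then have Y: "Y \<subseteq> {..<n} - {j, k}" unfolding A'_def by auto
      show "cnj (phi n adj \<gamma> (Y \<union> bits j k a b)) * phi n adj \<gamma> (Y \<union> bits j k a' b')
         = (1/2^n) * fx \<gamma> a b a' b' * ((\<Prod>u\<in>Nj. fx \<gamma> a (u\<in>Y) a' (u\<in>Y)) * (\<Prod>u\<in>Nk. fx \<gamma> b (u\<in>Y) b' (u\<in>Y)))"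
        unfolding phi_pair[OF sg jk Y] Nj_def Nk_def by (simp only: mult.assoc)
    qed
    also have "\<dots> = (1/2^n) * fx \<gamma> a b a' b' * (qc \<gamma> a a' b b' ^ t * qs \<gamma> a a' ^ (2 - t) * qs \<gamma> b b' ^ (2 - t)
           * 2 ^ card (A' - (Nj \<union> Nk)))"
    proof -
      have S: "(\<Sum>Y\<in>Pow A'. (\<Prod>u\<in>Nj. fx \<gamma> a (u\<in>Y) a' (u\<in>Y)) * (\<Prod>u\<in>Nk. fx \<gamma> b (u\<in>Y) b' (u\<in>Y)))
          = qc \<gamma> a a' b b' ^ t * qs \<gamma> a a' ^ (2 - t) * qs \<gamma> b b' ^ (2 - t) * 2 ^ card (A' - (Nj \<union> Nk))"
        using sumY[OF fA cs(5) cs(6), of "\<lambda>p. fx \<gamma> a p a' p" "\<lambda>p. fx \<gamma> b p b' p"] cs(1-3)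
        by (simp add: qc_def qs_def)
      show ?thesis unfolding S[symmetric] by (simp only: sum_distrib_left)
    qed
    also have "\<dots> = fx \<gamma> a b a' b' * qc \<gamma> a a' b b' ^ t * qs \<gamma> a a' ^ (2 - t) * qs \<gamma> b b' ^ (2 - t) / 2 ^ (6 - t)"
    proof -
      have "(2::complex) ^ n = 2 ^ card (A' - (Nj \<union> Nk)) * 2 ^ (6 - t)"
        using cs(4) by (metis power_add)
      then show ?thesis by (simp add: field_simps)
    qed
    finally show ?thesis .
  qed
  have "(\<Sum>x\<in>basis n. \<omega>j (j\<in>x) * \<omega>k (k\<in>x) * (cnj (qaoa_state n adj \<gamma> \<beta> x) * qaoa_state n adj \<gamma> \<beta> x))
     = (\<Sum>y\<in>basis n. \<Sum>y'\<in>basis n. cnj (phi n adj \<gamma> y) * phi n adj \<gamma> y' * (\<Prod>l<n. Gw (\<omega> l) \<beta> (l\<in>y) (l\<in>y')))"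
    unfolding w by (rule expect_expand)
  also have "\<dots> = (\<Sum>a\<in>UNIV. \<Sum>b\<in>UNIV. \<Sum>a'\<in>UNIV. \<Sum>b'\<in>UNIV. Gw \<omega>j \<beta> a a' * Gw \<omega>k \<beta> b b' *
        (\<Sum>Y\<in>Pow A'. cnj (phi n adj \<gamma> (Y \<union> bits j k a b)) * phi n adj \<gamma> (Y \<union> bits j k a' b')))"
    unfolding \<omega>_def A'_def by (rule reduce[OF jn kn jk'])
  also have "\<dots> = Wf \<omega>j \<omega>k \<gamma> \<beta> (edge_type adj (j, k))"
    unfolding inner Wf_def t_def ..
  finally show ?thesis .
qed

definition gC :: "real \<Rightarrow> real \<Rightarrow> nat \<Rightarrow> complex" where
  "gC \<gamma> \<beta> t = (Wf (\<lambda>_. 1) (\<lambda>_. 1) \<gamma> \<beta> t - Wf (\<lambda>b. complex_of_real (sgr b)) (\<lambda>b. complex_of_real (sgr b)) \<gamma> \<beta> t) / 2"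

lemma F1_edges:
  assumes r3: "regular3 n adj"
  shows "F1 n adj \<gamma> \<beta> = (\<Sum>e\<in>edges adj. gC \<gamma> \<beta> (edge_type adj e))"
proof -
  define \<psi> where "\<psi> = qaoa_state n adj \<gamma> \<beta>"
  define sg where "sg b = complex_of_real (sgr b)" for b
  have sgg: "simple_graph n adj" using r3 by (simp add: regular3_def)
  have fE: "finite (edges adj)" by (rule edges_finite[OF sgg])
  have C: "mapply n (cost_op n adj) \<psi> x = complex_of_real (cutr adj x) * \<psi> x" if "x \<in> basis n" for x
  proof -
    have "mapply n (cost_op n adj) \<psi> x = (\<Sum>y\<in>basis n. if y = x then complex_of_real (cutr adj x) * \<psi> x else 0)"
      unfolding mapply_def by (intro sum.cong refl) (auto simp: cost_basis[OF that])
    then show ?thesis using that by simp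
  qed
  have "F1 n adj \<gamma> \<beta> = (\<Sum>x\<in>basis n. complex_of_real (cutr adj x) * (cnj (\<psi> x) * \<psi> x))"
    unfolding F1_def Let_def \<psi>_def[symmetric] by (intro sum.cong refl) (simp add: C mult_ac)
  also have "\<dots> = (\<Sum>x\<in>basis n. \<Sum>e\<in>edges adj.
      ((\<lambda>_. 1) (fst e \<in> x) * (\<lambda>_. 1) (snd e \<in> x) * (cnj (\<psi> x) * \<psi> x)
       - sg (fst e \<in> x) * sg (snd e \<in> x) * (cnj (\<psi> x) * \<psi> x)) / 2)"
    unfolding cutr_def of_real_sum sum_distrib_right
    by (intro sum.cong refl) (simp add: sg_def field_simps)
  also have "\<dots> = (\<Sum>e\<in>edges adj. \<Sum>x\<in>basis n.
      ((\<lambda>_. 1) (fst e \<in> x) * (\<lambda>_. 1) (snd e \<in> x) * (cnj (\<psi> x) * \<psi> x)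
       - sg (fst e \<in> x) * sg (snd e \<in> x) * (cnj (\<psi> x) * \<psi> x)) / 2)"
    by (rule sum.swap)
  also have "\<dots> = (\<Sum>e\<in>edges adj. gC \<gamma> \<beta> (edge_type adj e))"
  proof (intro sum.cong refl)
    fix e assume e: "e \<in> edges adj"
    obtain j k where ejk: "e = (j, k)" by (cases e)
    have jk: "(j, k) \<in> edges adj" using e ejk by simp
    show "(\<Sum>x\<in>basis n. ((\<lambda>_. 1) (fst e \<in> x) * (\<lambda>_. 1) (snd e \<in> x) * (cnj (\<psi> x) * \<psi> x)
       - sg (fst e \<in> x) * sg (snd e \<in> x) * (cnj (\<psi> x) * \<psi> x)) / 2) = gC \<gamma> \<beta> (edge_type adj e)"
    proof -
      have e1: "(\<Sum>x\<in>basis n. (\<lambda>_. 1) (j \<in> x) * (\<lambda>_. 1) (k \<in> x) * (cnj (\<psi> x) * \<psi> x))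
          = Wf (\<lambda>_. 1) (\<lambda>_. 1) \<gamma> \<beta> (edge_type adj (j, k))"
        unfolding \<psi>_def by (rule edge_expect[OF r3 jk])
      have e2: "(\<Sum>x\<in>basis n. sg (j \<in> x) * sg (k \<in> x) * (cnj (\<psi> x) * \<psi> x))
          = Wf sg sg \<gamma> \<beta> (edge_type adj (j, k))"
        unfolding \<psi>_def by (rule edge_expect[OF r3 jk])
      show ?thesis
        unfolding ejk fst_conv snd_conv sum_divide_distrib[symmetric] sum_subtractf e1 e2
        unfolding gC_def sg_def ..
    qed
  qed
  finally show ?thesis .
qed

lemma F1_real: "F1 n adj \<gamma> \<beta> = complex_of_real (Re (F1 n adj \<gamma> \<beta>))"
proof -
  define \<psi> where "\<psi> = qaoa_state n adj \<gamma> \<beta>"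
  have C: "mapply n (cost_op n adj) \<psi> x = complex_of_real (cutr adj x) * \<psi> x" if "x \<in> basis n" for x
  proof -
    have "mapply n (cost_op n adj) \<psi> x = (\<Sum>y\<in>basis n. if y = x then complex_of_real (cutr adj x) * \<psi> x else 0)"
      unfolding mapply_def by (intro sum.cong refl) (auto simp: cost_basis[OF that])
    then show ?thesis using that by simp
  qed
  have "F1 n adj \<gamma> \<beta> = (\<Sum>x\<in>basis n. complex_of_real (cutr adj x * (cmod (\<psi> x))^2))"
    unfolding F1_def Let_def \<psi>_def[symmetric]
  proof (intro sum.cong refl)
    fix x assume x: "x \<in> basis n"
    have "cnj (\<psi> x) * \<psi> x = complex_of_real ((cmod (\<psi> x))^2)"
      using complex_norm_square[of "\<psi> x"] by (simp add: mult.commute)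
    then show "cnj (\<psi> x) * mapply n (cost_op n adj) \<psi> x = complex_of_real (cutr adj x * (cmod (\<psi> x))^2)"
      unfolding C[OF x] by (simp add: mult_ac)
  qed
  then show ?thesis by (simp add: of_real_sum[symmetric])
qed

lemma count_sum:
  fixes f :: "nat \<Rightarrow> real"
  assumes fE: "finite E" and le: "\<And>e. e \<in> E \<Longrightarrow> ty e \<le> 2"
  shows "(\<Sum>e\<in>E. f (ty e)) = real (card {e\<in>E. ty e = 0}) * f 0 + real (card {e\<in>E. ty e = 1}) * f 1 + real (card {e\<in>E. ty e = 2}) * f 2"
proof -
  have "(\<Sum>e\<in>E. f (ty e)) = (\<Sum>e\<in>E. \<Sum>t\<in>{0,1,2::nat}. if ty e = t then f t else 0)"
  proof (intro sum.cong refl)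
    fix e assume "e \<in> E"
    then have "ty e = 0 \<or> ty e = 1 \<or> ty e = 2" using le[of e] by auto
    then show "f (ty e) = (\<Sum>t\<in>{0,1,2::nat}. if ty e = t then f t else 0)" by auto
  qed
  also have "\<dots> = (\<Sum>t\<in>{0,1,2::nat}. \<Sum>e\<in>E. if ty e = t then f t else 0)" by (rule sum.swap)
  also have "\<dots> = (\<Sum>t\<in>{0,1,2::nat}. real (card {e\<in>E. ty e = t}) * f t)"
    using fE by (intro sum.cong refl) (simp add: sum.If_cases Int_def)
  finally show ?thesis by (simp add: add_ac)
qed

theorem mainTheorem2:
  "\<exists>F0 F1' F2 :: real \<Rightarrow> real \<Rightarrow> real.
     \<forall>n adj \<gamma> \<beta>. regular3 n adj \<longrightarrow>
       F1 n adj \<gamma> \<beta> =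
         complex_of_real (real (card (edges adj)) *
           (edge_frac adj 0 * F0 \<gamma> \<beta> + edge_frac adj 1 * F1' \<gamma> \<beta> + edge_frac adj 2 * F2 \<gamma> \<beta>))"
proof (intro exI allI impI)
  fix n adj \<gamma> \<beta> assume r3: "regular3 n adj"
  define Fr where "Fr t = Re (gC \<gamma> \<beta> t)" for t
  have sgg: "simple_graph n adj" using r3 by (simp add: regular3_def)
  have fE: "finite (edges adj)" by (rule edges_finite[OF sgg])
  have le: "edge_type adj e \<le> 2" if "e \<in> edges adj" for e
  proof -
    obtain j k where "e = (j, k)" by (cases e)
    then show ?thesis using counts(7)[OF r3, of j k] that by simp
  qed
  have "F1 n adj \<gamma> \<beta> = complex_of_real (\<Sum>e\<in>edges adj. Fr (edge_type adj e))"
    using F1_real[of n adj \<gamma> \<beta>] unfolding F1_edges[OF r3] Fr_def by simp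
  also have "(\<Sum>e\<in>edges adj. Fr (edge_type adj e))
      = real (card (edges adj)) * (edge_frac adj 0 * Fr 0 + edge_frac adj 1 * Fr 1 + edge_frac adj 2 * Fr 2)"
  proof (cases "card (edges adj) = 0")
    case True
    then have "edges adj = {}" using fE by simp
    then show ?thesis by simp
  next
    case False
    have cs: "(\<Sum>e\<in>edges adj. Fr (edge_type adj e)) = real (card {e\<in>edges adj. edge_type adj e = 0}) * Fr 0
       + real (card {e\<in>edges adj. edge_type adj e = 1}) * Fr 1 + real (card {e\<in>edges adj. edge_type adj e = 2}) * Fr 2"
      by (rule count_sum[OF fE le])
    show ?thesis unfolding cs edge_frac_def using False
      by (simp add: field_simps)
  qed
  finally show "F1 n adj \<gamma> \<beta> = complex_of_real (real (card (edges adj)) *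
     (edge_frac adj 0 * (\<lambda>\<gamma> \<beta>. Re (gC \<gamma> \<beta> 0)) \<gamma> \<beta> + edge_frac adj 1 * (\<lambda>\<gamma> \<beta>. Re (gC \<gamma> \<beta> 1)) \<gamma> \<beta>
      + edge_frac adj 2 * (\<lambda>\<gamma> \<beta>. Re (gC \<gamma> \<beta> 2)) \<gamma> \<beta>))"
    unfolding Fr_def by simp
qed

end
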